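(* For every word $x\in\{a,b\}^*$ there is a 2-state MCQFA (with complex amplitudes) over $\{a,b\}$ that accepts $x$ with probability $0$ and accepts every word $y\in\{a,b\}^*$ with $y\neq x$ with nonzero probability; i.e. the complement of the singleton language $\{x\}$ is recognized by a 2-state nondeterministic MCQFA.
   Context: A 2-state Moore–Crutchfield quantum finite automaton (MCQFA) over $\{a,b\}$ consists of unitaries $U_a,U_b\in\mathbb{C}^{2\times 2}$, an initial unit vector $|u_0\rangle\in\mathbb{C}^2$ and a set of accepting basis states; on input $w=w_1\cdots w_k$ the final state is $U_{w_k}\cdots U_{w_1}|u_0\rangle$ and the acceptance probability is the sum of the squared moduli of its accepting coordinates. A language $L$ is recognized by a nondeterministic MCQFA if words in $L$ are accepted with nonzero probability and words not in $L$ with probability $0$. *)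

theory Defs
  imports "HOL-Analysis.Analysis"
begin

datatype letter = a | b

definition conj_transpose :: "complex^2^2 \<Rightarrow> complex^2^2" where
  "conj_transpose U = (\<chi> i j. cnj (U $ j $ i))"

definition unitary2 :: "complex^2^2 \<Rightarrow> bool" where
  "unitary2 U \<longleftrightarrow> conj_transpose U ** U = mat 1"

record mcqfa2 =
  trans :: "letter \<Rightarrow> complex^2^2"
  init :: "complex^2"
  acc :: "2 set"

definition wf_mcqfa2 :: "mcqfa2 \<Rightarrow> bool" where
  "wf_mcqfa2 M \<longleftrightarrow> (\<forall>c. unitary2 (trans M c)) \<and> norm (init M) = 1"

definition final_state :: "mcqfa2 \<Rightarrow> letter list \<Rightarrow> complex^2" where
  "final_state M w = fold (\<lambda>c v. trans M c *v v) w (init M)"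

definition accept_prob :: "mcqfa2 \<Rightarrow> letter list \<Rightarrow> real" where
  "accept_prob M w = (\<Sum>i\<in>acc M. (cmod (final_state M w $ i))\<^sup>2)"

definition nd_recognizes :: "mcqfa2 \<Rightarrow> letter list set \<Rightarrow> bool" where
  "nd_recognizes M L \<longleftrightarrow> (\<forall>w. w \<in> L \<longleftrightarrow> accept_prob M w \<noteq> 0)"

end

theory Submission
  imports Defs
begin

instance letter :: countable by countable_datatype

definition pv :: "letter \<Rightarrow> complex^2" where
  "pv c = (case c of a \<Rightarrow> vector [1, 1] | b \<Rightarrow> vector [1, \<i>])"
definition qv :: "letter \<Rightarrow> complex^2" where
  "qv c = (case c of a \<Rightarrow> vector [1, -1] | b \<Rightarrow> vector [1, -\<i>])"

definition Um :: "letter \<Rightarrow> complex \<Rightarrow> complex^2^2" where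
  "Um c z = (\<chi> i j. (pv c $ i * cnj (pv c $ j) + z * (qv c $ i * cnj (qv c $ j))) / 2)"
definition Vm :: "letter \<Rightarrow> complex \<Rightarrow> complex^2^2" where
  "Vm c z = (\<chi> i j. (z * (pv c $ i * cnj (pv c $ j)) + qv c $ i * cnj (qv c $ j)) / 2)"

definition ip :: "complex^2 \<Rightarrow> complex^2 \<Rightarrow> complex" where
  "ip m v = cnj (m$1) * v$1 + cnj (m$2) * v$2"

definition e1 :: "complex^2" where "e1 = vector [1, 0]"

definition FU :: "complex \<Rightarrow> letter list \<Rightarrow> complex^2 \<Rightarrow> complex^2" where
  "FU z y v = fold (\<lambda>c v. Um c z *v v) y v"
definition FV :: "complex \<Rightarrow> letter list \<Rightarrow> complex^2 \<Rightarrow> complex^2" where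
  "FV z x v = foldr (\<lambda>c v. Vm c z *v v) x v"

lemma mv2: "(A::complex^2^2) *v v = vector [A$1$1 * v$1 + A$1$2 * v$2, A$2$1 * v$1 + A$2$2 * v$2]"
  by (simp add: vec_eq_iff forall_2 matrix_vector_mult_def sum_2)

lemma vec2_eq: "(v::complex^2) = w \<longleftrightarrow> v$1 = w$1 \<and> v$2 = w$2"
  by (simp add: vec_eq_iff forall_2)

lemma UV: "Um c z *v (Vm c z *v v) = z *s v"
  by (cases c) (simp_all add: mv2 vec2_eq Um_def Vm_def pv_def qv_def algebra_simps, 
      simp_all add: field_simps)

lemma unit: assumes "cmod w = 1" shows "unitary2 (Um c w)"
proof -
  have h: "cnj w * w = 1" using assms
    by (metis complex_norm_square mult.commute of_real_1 power_one)
  hence h': "w * cnj w = 1" by (simp add: mult.commute)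
  show ?thesis
    by (cases c) (simp_all add: unitary2_def conj_transpose_def vec_eq_iff forall_2 matrix_matrix_mult_def
       sum_2 mat_def Um_def pv_def qv_def algebra_simps h, simp_all add: field_simps h h')
qed

lemma mv_scale: "(A::complex^2^2) *v (k *s v) = k *s (A *v v)"
  by (simp add: mv2 vec2_eq algebra_simps)

lemma mv_scaleR: "(A::complex^2^2) *v (scaleR r v) = scaleR r (A *v v)"
  by (simp add: mv2 vec2_eq algebra_simps scaleR_conv_of_real[where ?'a=complex])

lemma FU_scale: "FU z y (k *s v) = k *s FU z y v"
  unfolding FU_def by (induction y arbitrary: v) (simp_all add: mv_scale)

lemma FU_scaleR: "FU z y (scaleR r v) = scaleR r (FU z y v)"
  unfolding FU_def by (induction y arbitrary: v) (simp_all add: mv_scaleR)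

lemma FUV: "FU z s (FV z s u) = z ^ length s *s u"
proof (induction s arbitrary: u)
  case Nil then show ?case by (simp add: FU_def FV_def)
next
  case (Cons c s)
  have "FU z (c # s) (FV z (c # s) u) = FU z s (Um c z *v (Vm c z *v FV z s u))"
    by (simp add: FU_def FV_def)
  also have "\<dots> = z *s FU z s (FV z s u)" by (simp add: UV FU_scale)
  also have "\<dots> = z ^ length (c # s) *s u" using Cons by simp
  finally show ?case .
qed

lemma FU_app: "FU z (s @ ys) (FV z (s @ xs) w) = z ^ length s *s FU z ys (FV z xs w)"
proof -
  have "FU z (s @ ys) (FV z (s @ xs) w) = FU z ys (FU z s (FV z s (FV z xs w)))"
    by (simp add: FU_def FV_def)
  thus ?thesis by (simp add: FUV FU_scale)
qed

definition polyv :: "(complex \<Rightarrow> complex^2) \<Rightarrow> bool" where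
  "polyv f \<longleftrightarrow> (\<forall>i. \<exists>p. \<forall>z. f z $ i = poly p z)"

lemma polyv_mv:
  assumes A: "\<And>i j. \<exists>p. \<forall>z. A z $ i $ j = poly p z" and f: "polyv f"
  shows "polyv (\<lambda>z. A z *v f z)"
  unfolding polyv_def
proof
  fix i
  obtain p1 where p1: "\<forall>z. A z $ i $ 1 = poly p1 z" using A by blast
  obtain p2 where p2: "\<forall>z. A z $ i $ 2 = poly p2 z" using A by blast
  obtain q1 where q1: "\<forall>z. f z $ 1 = poly q1 z" using f unfolding polyv_def by blast
  obtain q2 where q2: "\<forall>z. f z $ 2 = poly q2 z" using f unfolding polyv_def by blast
  have "\<forall>z. (A z *v f z) $ i = poly (p1 * q1 + p2 * q2) z"
    by (simp add: matrix_vector_mult_def sum_2 p1 p2 q1 q2)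
  thus "\<exists>p. \<forall>z. (A z *v f z) $ i = poly p z" by blast
qed

lemma Um_poly: "\<exists>p. \<forall>z. Um c z $ i $ j = poly p z"
proof -
  have "\<forall>z. Um c z $ i $ j = poly [:pv c $ i * cnj (pv c $ j) / 2, qv c $ i * cnj (qv c $ j) / 2:] z"
    by (simp add: Um_def add_divide_distrib)
  thus ?thesis by blast
qed

lemma Vm_poly: "\<exists>p. \<forall>z. Vm c z $ i $ j = poly p z"
proof -
  have "\<forall>z. Vm c z $ i $ j = poly [:qv c $ i * cnj (qv c $ j) / 2, pv c $ i * cnj (pv c $ j) / 2:] z"
    by (simp add: Vm_def add_divide_distrib algebra_simps)
  thus ?thesis by blast
qed

lemma polyv_const: "polyv (\<lambda>z. w)"
proof -
  have "\<forall>z. w $ i = poly [:w $ i:] z" for i by simp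
  thus ?thesis unfolding polyv_def by blast
qed

lemma polyv_FV: "polyv (\<lambda>z. FV z xs w)"
  unfolding FV_def
  by (induction xs) (simp_all add: polyv_const polyv_mv[OF Vm_poly])

lemma polyv_FU: "polyv f \<Longrightarrow> polyv (\<lambda>z. FU z y (f z))"
  unfolding FU_def
proof (induction y arbitrary: f)
  case Nil then show ?case by simp
next
  case (Cons c y)
  have "polyv (\<lambda>z. Um c z *v f z)" by (rule polyv_mv[OF Um_poly Cons.prems])
  from Cons.IH[OF this] show ?case by simp
qed

lemma U0: "Um c 0 *v v = (ip (pv c) v / 2) *s pv c"
  by (cases c) (simp_all add: mv2 vec2_eq ip_def Um_def pv_def qv_def algebra_simps add_divide_distrib)

lemma V0: "Vm c 0 *v v = (ip (qv c) v / 2) *s qv c"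
  by (cases c) (simp_all add: mv2 vec2_eq ip_def Vm_def pv_def qv_def algebra_simps add_divide_distrib)

lemma ip_scale: "ip m (k *s v) = k * ip m v"
  by (simp add: ip_def algebra_simps)

lemma ip_qq: "ip (qv c) (qv d) \<noteq> 0"
  by (cases c; cases d) (simp_all add: ip_def qv_def complex_eq_iff)
lemma ip_pp: "ip (pv c) (pv d) \<noteq> 0"
  by (cases c; cases d) (simp_all add: ip_def pv_def complex_eq_iff)
lemma ip_pq: "c \<noteq> d \<Longrightarrow> ip (pv c) (qv d) \<noteq> 0"
  by (cases c; cases d) (simp_all add: ip_def pv_def qv_def complex_eq_iff)
lemma ip_qe: "ip (qv c) e1 \<noteq> 0"
  by (cases c) (simp_all add: ip_def qv_def e1_def)
lemma ip_pe: "ip (pv c) e1 \<noteq> 0"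
  by (cases c) (simp_all add: ip_def pv_def e1_def)
lemma pv2: "pv c $ 2 \<noteq> 0"
  by (cases c) (simp_all add: pv_def)
lemma qv2: "qv c $ 2 \<noteq> 0"
  by (cases c) (simp_all add: qv_def)

lemma chainQ: "xs \<noteq> [] \<Longrightarrow> \<exists>k. k \<noteq> 0 \<and> FV 0 xs e1 = k *s qv (hd xs)"
proof (induction xs)
  case Nil then show ?case by simp
next
  case (Cons c t)
  show ?case
  proof (cases "t = []")
    case True
    have "FV 0 (c # t) e1 = (ip (qv c) e1 / 2) *s qv c" using True by (simp add: FV_def V0)
    then show ?thesis using ip_qe[of c] by (intro exI[of _ "ip (qv c) e1 / 2"]) auto
  next
    case False
    then obtain k where k: "k \<noteq> 0" "FV 0 t e1 = k *s qv (hd t)" using Cons.IH by blast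
    have "FV 0 (c # t) e1 = Vm c 0 *v FV 0 t e1" by (simp add: FV_def)
    also have "\<dots> = (k * ip (qv c) (qv (hd t)) / 2) *s qv c" by (simp add: k V0 ip_scale)
    finally show ?thesis using k ip_qq[of c "hd t"] by (intro exI[of _ "k * ip (qv c) (qv (hd t)) / 2"]) auto
  qed
qed

lemma chainP: "y \<noteq> [] \<Longrightarrow> ip (pv (hd y)) m \<noteq> 0 \<Longrightarrow> k \<noteq> 0 \<Longrightarrow>
   \<exists>k'. k' \<noteq> 0 \<and> FU 0 y (k *s m) = k' *s pv (last y)"
proof (induction y arbitrary: k m)
  case Nil then show ?case by simp
next
  case (Cons c t)
  have eq: "FU 0 (c # t) (k *s m) = FU 0 t ((k * ip (pv c) m / 2) *s pv c)"
    by (simp add: FU_def U0 ip_scale)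
  have nz: "k * ip (pv c) m / 2 \<noteq> 0" using Cons.prems by simp
  show ?case
  proof (cases "t = []")
    case True
    then show ?thesis using eq nz by (intro exI[of _ "k * ip (pv c) m / 2"]) (auto simp: FU_def)
  next
    case False
    from Cons.IH[OF False ip_pp nz] eq False show ?thesis by simp
  qed
qed

lemma decomp: "y \<noteq> x \<Longrightarrow> \<exists>s ys xs. y = s @ ys \<and> x = s @ xs \<and> (ys \<noteq> [] \<or> xs \<noteq> [])
   \<and> (ys = [] \<or> xs = [] \<or> hd ys \<noteq> hd xs)"
proof (induction y arbitrary: x)
  case Nil then show ?case by (intro exI[of _ "[]"] exI[of _ "[]"] exI[of _ x]) auto
next
  case (Cons c t)
  show ?case
  proof (cases x)
    case Nil then show ?thesis by (intro exI[of _ "[]"] exI[of _ "c # t"] exI[of _ "[]"]) auto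
  next
    case (Cons d u)
    show ?thesis
    proof (cases "c = d")
      case True
      then have "t \<noteq> u" using Cons.prems Cons by simp
      from Cons.IH[OF this] obtain s ys xs where "t = s @ ys" "u = s @ xs" "ys \<noteq> [] \<or> xs \<noteq> []"
        "ys = [] \<or> xs = [] \<or> hd ys \<noteq> hd xs" by blast
      then show ?thesis using True Cons by (intro exI[of _ "c # s"] exI[of _ ys] exI[of _ xs]) auto
    next
      case False
      then show ?thesis using Cons by (intro exI[of _ "[]"] exI[of _ "c # t"] exI[of _ x]) auto
    qed
  qed
qed

lemma H0: "ys \<noteq> [] \<or> xs \<noteq> [] \<Longrightarrow> ys = [] \<or> xs = [] \<or> hd ys \<noteq> hd xs \<Longrightarrow>
   FU 0 ys (FV 0 xs e1) $ 2 \<noteq> 0"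
proof (cases "ys = []")
  case True
  assume "ys \<noteq> [] \<or> xs \<noteq> []"
  with True have "xs \<noteq> []" by simp
  then obtain k where "k \<noteq> 0" "FV 0 xs e1 = k *s qv (hd xs)" using chainQ by blast
  then show ?thesis using True qv2 by (simp add: FU_def)
next
  case False
  assume h: "ys = [] \<or> xs = [] \<or> hd ys \<noteq> hd xs"
  obtain k m where km: "k \<noteq> 0" "FV 0 xs e1 = k *s m" "ip (pv (hd ys)) m \<noteq> 0"
  proof (cases "xs = []")
    case True
    then show ?thesis using that[of 1 e1] ip_pe by (simp add: FV_def)
  next
    case F2: False
    then obtain k where "k \<noteq> 0" "FV 0 xs e1 = k *s qv (hd xs)" using chainQ by blast
    then show ?thesis using that[of k "qv (hd xs)"] ip_pq h False F2 by auto
  qed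
  then obtain k' where "k' \<noteq> 0" "FU 0 ys (k *s m) = k' *s pv (last ys)"
    using chainP[OF False km(3) km(1)] by blast
  then show ?thesis using km pv2 by simp
qed

lemma finite_bad:
  assumes "y \<noteq> x"
  shows "finite {z. z \<noteq> 0 \<and> FU z y (FV z x e1) $ 2 = 0}"
proof -
  obtain s ys xs where d: "y = s @ ys" "x = s @ xs" "ys \<noteq> [] \<or> xs \<noteq> []"
    "ys = [] \<or> xs = [] \<or> hd ys \<noteq> hd xs" using decomp[OF assms] by blast
  obtain p where p: "\<forall>z. FU z ys (FV z xs e1) $ 2 = poly p z"
    using polyv_FU[OF polyv_FV[of xs e1]] unfolding polyv_def by blast
  have "poly p 0 \<noteq> 0" using H0[OF d(3,4)] p by simp
  hence "p \<noteq> 0" by auto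
  hence fin: "finite {z. poly p z = 0}" by (rule poly_roots_finite)
  have "{z. z \<noteq> 0 \<and> FU z y (FV z x e1) $ 2 = 0} \<subseteq> {z. poly p z = 0}"
    using p by (auto simp: d FU_app)
  thus ?thesis using fin finite_subset by blast
qed

lemma good_omega: "\<exists>w. cmod w = 1 \<and> (\<forall>y. y \<noteq> x \<longrightarrow> FU w y (FV w x e1) $ 2 \<noteq> 0)"
proof -
  define B where "B = (\<Union>y\<in>{y. y \<noteq> x}. {z. z \<noteq> 0 \<and> FU z y (FV z x e1) $ 2 = 0})"
  have "countable B" unfolding B_def
    by (intro countable_UN[of _ id, simplified]) (auto intro: countable_finite finite_bad)
  moreover have "uncountable (sphere (0::complex) 1)"
    by (rule connected_uncountable[of _ 1 "-1"]) (auto intro: connected_sphere)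
  ultimately obtain w where w: "w \<in> sphere (0::complex) 1" "w \<notin> B"
    by (metis countable_subset subsetI)
  have "w \<noteq> 0" using w(1) by auto
  thus ?thesis using w unfolding B_def by (intro exI[of _ w]) auto
qed

theorem mainTheorem14:
  fixes x :: "letter list"
  shows "\<exists>M. wf_mcqfa2 M \<and> accept_prob M x = 0 \<and> (\<forall>y. y \<noteq> x \<longrightarrow> accept_prob M y \<noteq> 0)"
proof -
  obtain w where w1: "cmod w = 1" and wg: "\<forall>y. y \<noteq> x \<longrightarrow> FU w y (FV w x e1) $ 2 \<noteq> 0"
    using good_omega by blast
  define u where "u = FV w x e1"
  have Fx: "FU w x u = w ^ length x *s e1" unfolding u_def by (rule FUV)
  have "u \<noteq> 0"
  proof
    assume "u = 0"
    hence "FU w x u = 0 *s FU w x 0" using FU_scale[of w x 0 0] by simp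
    hence "FU w x u = 0" by simp
    moreover have "(w ^ length x *s e1) $ 1 \<noteq> 0" using w1 by (auto simp: e1_def)
    ultimately have "(w ^ length x *s e1) $ 1 \<noteq> 0" "(w ^ length x *s e1) $ 1 = 0"
      using Fx by (metis zero_index)+
    thus False by blast
  qed
  define M where "M = \<lparr>trans = (\<lambda>c. Um c w), init = scaleR (1 / norm u) u, acc = {2}\<rparr>"
  have fs: "final_state M y = scaleR (1 / norm u) (FU w y u)" for y
    by (simp add: M_def final_state_def FU_def[symmetric] FU_scaleR)
  have ap: "accept_prob M y = (cmod (FU w y u $ 2) / norm u)\<^sup>2" for y
    by (simp add: accept_prob_def fs) (simp add: M_def norm_divide)
  have "wf_mcqfa2 M" using unit[OF w1] \<open>u \<noteq> 0\<close> by (simp add: wf_mcqfa2_def M_def)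
  moreover have "accept_prob M x = 0" using ap Fx by (simp add: e1_def)
  moreover have "\<forall>y. y \<noteq> x \<longrightarrow> accept_prob M y \<noteq> 0"
    using wg \<open>u \<noteq> 0\<close> by (simp add: ap u_def)
  ultimately show ?thesis by blast
qed

end
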